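(* Let $\tau$ be a veering triangulation of $M$ with dual graph $\Gamma$. If two directed cycles $c_1,c_2$ in $\Gamma$ are freely homotopic in $M$, then the number of anti-branching turns of $c_1$ and the number of anti-branching turns of $c_2$ have the same parity.
   Context: $\tau$ is a veering triangulation of $M$ (taut ideal triangulation with cooriented faces, each tetrahedron having two bottom and two top faces, a bottom edge, a top edge and four side edges, angle sum $2\pi$ around edges, with a consistent right/left veer on edges modelled on a thickened rhombus whose side edges of positive slope are right-veering and of negative slope left-veering). The dual graph $\Gamma$ has a vertex in the interior of each tetrahedron and, for each face, a directed edge crossing that face from the tetrahedron for which it is a top face to the tetrahedron for which it is a bottom face; it is embedded in $M$. For a bottom face $f$ of a tetrahedron $t$, let $A(f)$ be the top face of $t$ meeting $f$ along the edge of $t$ whose veer equals that of the top edge of $t$. A directed cycle in $\Gamma$ passing through a tetrahedron $t$ enters through a bottom face $f$ and exits through a top face $f'$; this turn (at the vertex of $t$) is anti-branching if $f'=A(f)$ and branching otherwise. Turns are counted cyclically around the cycle. *)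

theory Defs
  imports Main "HOL-Combinatorics.Permutations"
begin

(* Each tetrahedron has vertex labels 0,1,2,3, chosen as in the rhombus
   picture seen from above (coorientation pointing to the viewer):
     0 = W, 1 = E   (bottom edge {0,1}),
     2 = S, 3 = N   (top edge {2,3}).
   Local face i of tetrahedron t = face opposite vertex i.
   Faces opposite 2,3 contain the bottom edge: bottom faces.
   Faces opposite 0,1 contain the top edge: top faces.
   gl t i = (t', s): face i of t is glued to face (s i) of t' by the
   vertex map s (restricted to the vertices of the face). *)

definition V4 :: "nat set" where "V4 = {0,1,2,3}"

type_synonym 't gluing = "'t \<Rightarrow> nat \<Rightarrow> 't \<times> (nat \<Rightarrow> nat)"

definition face_pairing :: "'t set \<Rightarrow> 't gluing \<Rightarrow> bool" where
  "face_pairing T gl \<longleftrightarrow>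
     (\<forall>t\<in>T. \<forall>i\<in>V4. fst (gl t i) \<in> T \<and> bij_betw (snd (gl t i)) V4 V4
        \<and> (fst (gl t i), snd (gl t i) i) \<noteq> (t, i)
        \<and> fst (gl (fst (gl t i)) (snd (gl t i) i)) = t
        \<and> (\<forall>a\<in>V4. snd (gl (fst (gl t i)) (snd (gl t i) i)) (snd (gl t i) a) = a))"

(* coorientation: every top face is glued to a bottom face and vice versa *)
definition taut_gluing :: "'t set \<Rightarrow> 't gluing \<Rightarrow> bool" where
  "taut_gluing T gl \<longleftrightarrow>
     (\<forall>t\<in>T. \<forall>i\<in>V4. (i \<in> {0,1} \<longleftrightarrow> snd (gl t i) i \<in> {2,3}))"

(* orientability with all tetrahedra consistently oriented by their labels:
   every gluing permutation is odd *)
definition oriented_gluing :: "'t set \<Rightarrow> 't gluing \<Rightarrow> bool" where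
  "oriented_gluing T gl \<longleftrightarrow>
     (\<forall>t\<in>T. \<forall>i\<in>V4. \<not> evenperm (\<lambda>a. if a \<in> V4 then snd (gl t i) a else a))"

(* identification of oriented edge slots (t,a,b) across glued faces *)
definition slot_step :: "'t set \<Rightarrow> 't gluing \<Rightarrow> 't \<times> nat \<times> nat \<Rightarrow> 't \<times> nat \<times> nat \<Rightarrow> bool" where
  "slot_step T gl x y \<longleftrightarrow>
     (case x of (t, a, b) \<Rightarrow> t \<in> T \<and> a \<in> V4 \<and> b \<in> V4 \<and> a \<noteq> b \<and>
        (\<exists>i\<in>V4. a \<noteq> i \<and> b \<noteq> i \<and>
            y = (fst (gl t i), snd (gl t i) a, snd (gl t i) b)))"

definition edge_equiv :: "'t set \<Rightarrow> 't gluing \<Rightarrow> 't \<times> nat \<times> nat \<Rightarrow> 't \<times> nat \<times> nat \<Rightarrow> bool" where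
  "edge_equiv T gl = (\<lambda>x y. slot_step T gl x y \<or> slot_step T gl y x)\<^sup>*\<^sup>*"

(* the quotient is a 3-manifold (after removing ideal vertices):
   no edge is identified with itself in reverse *)
definition manifold_gluing :: "'t set \<Rightarrow> 't gluing \<Rightarrow> bool" where
  "manifold_gluing T gl \<longleftrightarrow>
     (\<forall>t\<in>T. \<forall>a\<in>V4. \<forall>b\<in>V4. a \<noteq> b \<longrightarrow> \<not> edge_equiv T gl (t, a, b) (t, b, a))"

(* angle sum 2*pi around every edge: angle pi at top/bottom edges,
   0 at side edges, so exactly two pi-angles around each edge *)
definition angle_sum_2pi :: "'t set \<Rightarrow> 't gluing \<Rightarrow> bool" where
  "angle_sum_2pi T gl \<longleftrightarrow>
     (\<forall>t\<in>T. \<forall>a\<in>V4. \<forall>b\<in>V4. a \<noteq> b \<longrightarrow>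
        card {(t', a', b'). edge_equiv T gl (t, a, b) (t', a', b')
                \<and> ({a', b'} = {0, 1} \<or> {a', b'} = {2, 3})} = 2)"

(* veer: veer t {a,b} = True means the edge {a,b} of t is right-veering *)
definition veer_well_defined :: "'t set \<Rightarrow> 't gluing \<Rightarrow> ('t \<Rightarrow> nat set \<Rightarrow> bool) \<Rightarrow> bool" where
  "veer_well_defined T gl veer \<longleftrightarrow>
     (\<forall>t\<in>T. \<forall>i\<in>V4. \<forall>a\<in>V4. \<forall>b\<in>V4. a \<noteq> i \<and> b \<noteq> i \<and> a \<noteq> b \<longrightarrow>
        veer t {a, b} = veer (fst (gl t i)) {snd (gl t i) a, snd (gl t i) b})"

(* rhombus model: side edges of positive slope (W-N = {0,3}, E-S = {1,2})
   are right-veering, those of negative slope (N-E = {1,3}, S-W = {0,2})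
   are left-veering *)
definition veer_rhombus :: "'t set \<Rightarrow> ('t \<Rightarrow> nat set \<Rightarrow> bool) \<Rightarrow> bool" where
  "veer_rhombus T veer \<longleftrightarrow>
     (\<forall>t\<in>T. veer t {0, 3} \<and> veer t {1, 2} \<and> \<not> veer t {1, 3} \<and> \<not> veer t {0, 2})"

definition veering_triangulation :: "'t set \<Rightarrow> 't gluing \<Rightarrow> ('t \<Rightarrow> nat set \<Rightarrow> bool) \<Rightarrow> bool" where
  "veering_triangulation T gl veer \<longleftrightarrow>
     finite T \<and> face_pairing T gl \<and> taut_gluing T gl \<and> oriented_gluing T gl
     \<and> manifold_gluing T gl \<and> angle_sum_2pi T gl
     \<and> veer_well_defined T gl veer \<and> veer_rhombus T veer"

(* ---------- dual graph Gamma ----------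
   A directed edge of Gamma is a top face (t,i), i in {0,1}; it goes from t
   to the tetrahedron fst (gl t i), for which it is the bottom face snd (gl t i) i.
   A letter (f, True) traverses f forwards, (f, False) backwards. *)

definition dual_edge :: "'t set \<Rightarrow> 't \<times> nat \<Rightarrow> bool" where
  "dual_edge T f \<longleftrightarrow> fst f \<in> T \<and> snd f \<in> {0, 1}"

definition dsrc :: "'t gluing \<Rightarrow> ('t \<times> nat) \<times> bool \<Rightarrow> 't" where
  "dsrc gl x = (case x of ((t, i), b) \<Rightarrow> if b then t else fst (gl t i))"

definition dtgt :: "'t gluing \<Rightarrow> ('t \<times> nat) \<times> bool \<Rightarrow> 't" where
  "dtgt gl x = (case x of ((t, i), b) \<Rightarrow> if b then fst (gl t i) else t)"

definition dinv :: "('t \<times> nat) \<times> bool \<Rightarrow> ('t \<times> nat) \<times> bool" where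
  "dinv x = (fst x, \<not> snd x)"

fun walk :: "'t set \<Rightarrow> 't gluing \<Rightarrow> 't \<Rightarrow> (('t \<times> nat) \<times> bool) list \<Rightarrow> 't \<Rightarrow> bool" where
  "walk T gl v [] v' \<longleftrightarrow> v = v'"
| "walk T gl v (x # w) v' \<longleftrightarrow> dual_edge T (fst x) \<and> dsrc gl x = v \<and> walk T gl (dtgt gl x) w v'"

definition closed_walk :: "'t set \<Rightarrow> 't gluing \<Rightarrow> 't \<times> (('t \<times> nat) \<times> bool) list \<Rightarrow> bool" where
  "closed_walk T gl p \<longleftrightarrow> fst p \<in> T \<and> walk T gl (fst p) (snd p) (fst p)"

(* ---------- 2-cells of the dual complex (dual to the edges of tau) ----------
   State (t,a,b,c): in tetrahedron t at the edge slot {a,b}, about to leave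
   through face c (c not in {a,b}). *)

definition fourth :: "nat \<Rightarrow> nat \<Rightarrow> nat \<Rightarrow> nat" where
  "fourth a b c = (THE d. d \<in> V4 \<and> d \<notin> {a, b, c})"

definition around :: "'t gluing \<Rightarrow> 't \<times> nat \<times> nat \<times> nat \<Rightarrow> 't \<times> nat \<times> nat \<times> nat" where
  "around gl s = (case s of (t, a, b, c) \<Rightarrow>
      (fst (gl t c), snd (gl t c) a, snd (gl t c) b, snd (gl t c) (fourth a b c)))"

(* the letter of Gamma crossed when leaving t through face c *)
definition cross :: "'t gluing \<Rightarrow> 't \<times> nat \<times> nat \<times> nat \<Rightarrow> ('t \<times> nat) \<times> bool" where
  "cross gl s = (case s of (t, a, b, c) \<Rightarrow>
      (if c \<in> {0, 1} then ((t, c), True) else ((fst (gl t c), snd (gl t c) c), False)))"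

definition relator :: "'t set \<Rightarrow> 't gluing \<Rightarrow> (('t \<times> nat) \<times> bool) list \<Rightarrow> bool" where
  "relator T gl r \<longleftrightarrow>
     (\<exists>t a b c n. t \<in> T \<and> a \<in> V4 \<and> b \<in> V4 \<and> c \<in> V4 \<and> distinct [a, b, c] \<and> n \<ge> 1
        \<and> (around gl ^^ n) (t, a, b, c) = (t, a, b, c)
        \<and> r = map (\<lambda>k. cross gl ((around gl ^^ k) (t, a, b, c))) [0..<n])"

(* elementary moves of free homotopy of closed edge-loops in the dual
   2-complex (a spine onto which M deformation retracts) *)
definition hstep :: "'t set \<Rightarrow> 't gluing \<Rightarrow> 't \<times> (('t \<times> nat) \<times> bool) list
                     \<Rightarrow> 't \<times> (('t \<times> nat) \<times> bool) list \<Rightarrow> bool" where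
  "hstep T gl p q \<longleftrightarrow> closed_walk T gl p \<and> closed_walk T gl q \<and>
     ((\<exists>x u. snd p = x # u \<and> q = (dtgt gl x, u @ [x]))
      \<or> (\<exists>u z x. snd p = u @ z \<and> q = (fst p, u @ [x, dinv x] @ z))
      \<or> (\<exists>u z r. relator T gl r \<and> snd p = u @ z \<and> q = (fst p, u @ r @ z)))"

definition freely_homotopic :: "'t set \<Rightarrow> 't gluing \<Rightarrow> 't \<times> (('t \<times> nat) \<times> bool) list
                     \<Rightarrow> 't \<times> (('t \<times> nat) \<times> bool) list \<Rightarrow> bool" where
  "freely_homotopic T gl = (\<lambda>p q. hstep T gl p q \<or> hstep T gl q p)\<^sup>*\<^sup>*"

definition cycle_loop :: "('t \<times> nat) list \<Rightarrow> 't \<times> (('t \<times> nat) \<times> bool) list" where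
  "cycle_loop c = (fst (hd c), map (\<lambda>f. (f, True)) c)"

definition directed_cycle :: "'t set \<Rightarrow> 't gluing \<Rightarrow> ('t \<times> nat) list \<Rightarrow> bool" where
  "directed_cycle T gl c \<longleftrightarrow> c \<noteq> [] \<and> closed_walk T gl (cycle_loop c)"

(* A(f) for the bottom face j (j in {2,3}) of t: the top face i of t meeting
   face j along the edge V4 - {i,j} whose veer equals that of the top edge {2,3} *)
definition Aface :: "('t \<Rightarrow> nat set \<Rightarrow> bool) \<Rightarrow> 't \<Rightarrow> nat \<Rightarrow> nat" where
  "Aface veer t j = (THE i. i \<in> {0, 1} \<and> veer t (V4 - {i, j}) = veer t {2, 3})"

(* turn k: at the head of c!k, entering through the bottom face
   snd (gl t i) i and leaving through the top face of c!(k+1 mod n) *)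
definition anti_branching_turn :: "'t gluing \<Rightarrow> ('t \<Rightarrow> nat set \<Rightarrow> bool) \<Rightarrow> ('t \<times> nat) list \<Rightarrow> nat \<Rightarrow> bool" where
  "anti_branching_turn gl veer c k \<longleftrightarrow>
     (case c ! k of (t, i) \<Rightarrow>
        snd (c ! (Suc k mod length c)) = Aface veer (fst (gl t i)) (snd (gl t i) i))"

definition num_anti_branching :: "'t gluing \<Rightarrow> ('t \<Rightarrow> nat set \<Rightarrow> bool) \<Rightarrow> ('t \<times> nat) list \<Rightarrow> nat" where
  "num_anti_branching gl veer c = card {k. k < length c \<and> anti_branching_turn gl veer c k}"

end

theory Submission
  imports Defs "HOL-Combinatorics.Permutations"
begin

definition vv :: "bool \<Rightarrow> bool \<Rightarrow> nat \<Rightarrow> nat \<Rightarrow> bool" where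
  "vv vb vt x y = (if x + y = 1 then vb else if x + y = 5 then vt else x + y = 3)"

definition phi :: "nat \<Rightarrow> nat \<Rightarrow> bool \<Rightarrow> bool" where
  "phi a b vt = (if a = 2 \<and> b = 3 then True else if a = 3 \<and> b = 2 then False
      else (vt \<noteq> (a = 1 \<or> ((a = 2 \<or> a = 3) \<and> b = 0))))"

definition perm_list :: "nat list list" where
  "perm_list = [[0,1,2,3],[0,1,3,2],[0,2,1,3],[0,2,3,1],[0,3,1,2],[0,3,2,1],
                [1,0,2,3],[1,0,3,2],[1,2,0,3],[1,2,3,0],[1,3,0,2],[1,3,2,0],
                [2,0,1,3],[2,0,3,1],[2,1,0,3],[2,1,3,0],[2,3,0,1],[2,3,1,0],
                [3,0,1,2],[3,0,2,1],[3,1,0,2],[3,1,2,0],[3,2,0,1],[3,2,1,0]]"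

lemma core:
  fixes s :: "nat \<Rightarrow> nat"
  assumes P: "[s 0, s 1, s 2, s 3] \<in> set perm_list"
    and O: "[s 0, s 1, s 2, s 3] \<noteq> [2,3,0,1]" "[s 0, s 1, s 2, s 3] \<noteq> [3,2,1,0]"
    and abc: "a \<in> {0,1,2,3}" "b \<in> {0,1,2,3}" "c \<in> {0,1,2,3}" "a \<noteq> b" "a \<noteq> c" "b \<noteq> c"
    and taut: "c \<in> {0,1} \<longleftrightarrow> s c \<in> {2,3}"
    and vr: "\<forall>x\<in>{0,1,2,3}. \<forall>y\<in>{0,1,2,3}. x \<noteq> y \<longrightarrow> x \<noteq> c \<longrightarrow> y \<noteq> c \<longrightarrow>
              vv vb vt x y = vv vb2 vt2 (s x) (s y)"
  shows "(if c \<in> {0,1} then (odd c = (vt2 \<noteq> odd (s c))) else (odd (s c) = (vt \<noteq> odd c)))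
         = (phi a b vt \<noteq> phi (s a) (s b) vt2)"
  using P abc(3)
  apply (simp add: perm_list_def)
  apply (elim disjE conjE)
  using abc(1,2,4,5,6) taut vr O
  apply (simp_all add: vv_def phi_def)
  apply (elim disjE; simp; fail)+
  done


lemma vv_lemma:
  assumes "veer_rhombus T veer" "t \<in> T" "x \<in> V4" "y \<in> V4" "x \<noteq> y"
  shows "veer t {x, y} = vv (veer t {0,1}) (veer t {2,3}) x y"
proof -
  have r: "veer t {0, 3}" "veer t {1, 2}" "\<not> veer t {1, 3}" "\<not> veer t {0, 2}"
    using assms(1,2) unfolding veer_rhombus_def by auto
  show ?thesis using assms(3-5) r unfolding V4_def
    by (auto simp: vv_def insert_commute)
qed

lemma perm_of_bij:
  assumes "bij_betw s V4 V4"
  shows "[s 0, s 1, s 2, s 3] \<in> set perm_list"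
proof -
  have m: "s 0 \<in> {0,1,2,3}" "s 1 \<in> {0,1,2,3}" "s 2 \<in> {0,1,2,3}" "s 3 \<in> {0,1,2,3}"
    using bij_betw_apply[OF assms] unfolding V4_def by auto
  have i: "inj_on s V4" using assms bij_betw_imp_inj_on by blast
  have d: "s 0 \<noteq> s 1" "s 0 \<noteq> s 2" "s 0 \<noteq> s 3" "s 1 \<noteq> s 2" "s 1 \<noteq> s 3" "s 2 \<noteq> s 3"
    using i unfolding inj_on_def V4_def by (auto dest: spec[where x=0] spec[where x=1] spec[where x=2] spec[where x=3])
  show ?thesis using m d unfolding perm_list_def
    apply (simp only: insert_iff empty_iff simp_thms)
    apply (elim disjE)
    apply simp_all
    done
qed

lemma odd_perm_not:
  assumes "\<not> evenperm (\<lambda>a. if a \<in> V4 then s a else a)"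
  shows "[s 0, s 1, s 2, s 3] \<noteq> [2,3,0,1]" "[s 0, s 1, s 2, s 3] \<noteq> [3,2,1,0]"
proof -
  show "[s 0, s 1, s 2, s 3] \<noteq> [2,3,0,1]"
  proof
    assume h: "[s 0, s 1, s 2, s 3] = [2,3,0,1]"
    have "(\<lambda>a. if a \<in> V4 then s a else a) = transpose (0::nat) 2 \<circ> transpose 1 3"
    proof
      fix x :: nat
      show "(if x \<in> V4 then s x else x) = (transpose (0::nat) 2 \<circ> transpose 1 3) x"
        using h unfolding V4_def by (auto simp: transpose_def)
    qed
    moreover have "evenperm (transpose (0::nat) 2 \<circ> transpose 1 3)"
      by (simp add: evenperm_comp permutation_swap_id evenperm_swap)
    ultimately show False using assms by simp
  qed
  show "[s 0, s 1, s 2, s 3] \<noteq> [3,2,1,0]"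
  proof
    assume h: "[s 0, s 1, s 2, s 3] = [3,2,1,0]"
    have "(\<lambda>a. if a \<in> V4 then s a else a) = transpose (0::nat) 3 \<circ> transpose 1 2"
    proof
      fix x :: nat
      show "(if x \<in> V4 then s x else x) = (transpose (0::nat) 3 \<circ> transpose 1 2) x"
        using h unfolding V4_def by (auto simp: transpose_def)
    qed
    moreover have "evenperm (transpose (0::nat) 3 \<circ> transpose 1 2)"
      by (simp add: evenperm_comp permutation_swap_id evenperm_swap)
    ultimately show False using assms by simp
  qed
qed

lemma fourth_prop:
  assumes "a \<in> V4" "b \<in> V4" "c \<in> V4" "distinct [a,b,c]"
  shows "fourth a b c \<in> V4 \<and> fourth a b c \<notin> {a, b, c}"
proof -
  have ex: "\<exists>!d. d \<in> V4 \<and> d \<notin> {a, b, c}"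
  proof (rule ex1I[where a="6 - a - b - c"])
    show "6 - a - b - c \<in> V4 \<and> 6 - a - b - c \<notin> {a, b, c}"
      using assms unfolding V4_def by auto
    fix d assume "d \<in> V4 \<and> d \<notin> {a, b, c}"
    then show "d = 6 - a - b - c" using assms unfolding V4_def by auto
  qed
  show ?thesis unfolding fourth_def using theI'[OF ex] .
qed

definition valid :: "'t set \<Rightarrow> 't \<times> nat \<times> nat \<times> nat \<Rightarrow> bool" where
  "valid T s = (case s of (t, a, b, c) \<Rightarrow> t \<in> T \<and> a \<in> V4 \<and> b \<in> V4 \<and> c \<in> V4 \<and> distinct [a, b, c])"

lemma valid_around:
  assumes fp: "face_pairing T gl" and v: "valid T s"
  shows "valid T (around gl s)"
proof -
  obtain t a b c where s: "s = (t, a, b, c)" by (cases s) auto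
  have h: "t \<in> T" "a \<in> V4" "b \<in> V4" "c \<in> V4" "distinct [a,b,c]" using v s by (auto simp: valid_def)
  have g: "fst (gl t c) \<in> T" "bij_betw (snd (gl t c)) V4 V4" using fp h unfolding face_pairing_def by auto
  have f: "fourth a b c \<in> V4" "fourth a b c \<notin> {a,b,c}" using fourth_prop[OF h(2-5)] by auto
  have inj: "inj_on (snd (gl t c)) V4" using g(2) bij_betw_imp_inj_on by blast
  show ?thesis unfolding s around_def valid_def
    using g h f bij_betw_apply[OF g(2)] inj_onD[OF inj]
    by auto
qed

definition wface :: "'t gluing \<Rightarrow> ('t \<Rightarrow> nat set \<Rightarrow> bool) \<Rightarrow> 't \<times> nat \<Rightarrow> bool" where
  "wface gl veer f = (case f of (t, i) \<Rightarrow> (odd i = (veer (fst (gl t i)) {2,3} \<noteq> odd (snd (gl t i) i))))"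

definition Phi :: "('t \<Rightarrow> nat set \<Rightarrow> bool) \<Rightarrow> 't \<times> nat \<times> nat \<times> nat \<Rightarrow> bool" where
  "Phi veer s = (case s of (t, a, b, c) \<Rightarrow> phi a b (veer t {2,3}))"

lemma local_step:
  assumes vt: "veering_triangulation T gl veer" and v: "valid T s"
  shows "wface gl veer (fst (cross gl s)) = (Phi veer s \<noteq> Phi veer (around gl s))"
proof -
  obtain t a b c where s: "s = (t, a, b, c)" by (cases s) auto
  have h: "t \<in> T" "a \<in> V4" "b \<in> V4" "c \<in> V4" "distinct [a,b,c]" using v s by (auto simp: valid_def)
  have fp: "face_pairing T gl" and tg: "taut_gluing T gl" and og: "oriented_gluing T gl"
    and vw: "veer_well_defined T gl veer" and vr: "veer_rhombus T veer"
    using vt unfolding veering_triangulation_def by auto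
  define sg where "sg = snd (gl t c)"
  define t2 where "t2 = fst (gl t c)"
  have g: "t2 \<in> T" "bij_betw sg V4 V4" "fst (gl t2 (sg c)) = t" "snd (gl t2 (sg c)) (sg c) = c"
    using fp h unfolding face_pairing_def sg_def t2_def by auto
  have inj: "inj_on sg V4" using g(2) bij_betw_imp_inj_on by blast
  have P: "[sg 0, sg 1, sg 2, sg 3] \<in> set perm_list" using perm_of_bij[OF g(2)] .
  have ev: "\<not> evenperm (\<lambda>a. if a \<in> V4 then sg a else a)" using og h unfolding oriented_gluing_def sg_def by auto
  note O = odd_perm_not[OF ev]
  have taut: "c \<in> {0,1} \<longleftrightarrow> sg c \<in> {2,3}" using tg h unfolding taut_gluing_def sg_def by auto
  have vrr: "\<forall>x\<in>{0,1,2,3}. \<forall>y\<in>{0,1,2,3}. x \<noteq> y \<longrightarrow> x \<noteq> c \<longrightarrow> y \<noteq> c \<longrightarrow>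
              vv (veer t {0,1}) (veer t {2,3}) x y = vv (veer t2 {0,1}) (veer t2 {2,3}) (sg x) (sg y)"
  proof (intro ballI impI)
    fix x y :: nat assume xy: "x \<in> {0,1,2,3}" "y \<in> {0,1,2,3}" "x \<noteq> y" "x \<noteq> c" "y \<noteq> c"
    have xy4: "x \<in> V4" "y \<in> V4" using xy unfolding V4_def by auto
    have "veer t {x, y} = veer t2 {sg x, sg y}"
      using vw h xy4 xy unfolding veer_well_defined_def sg_def t2_def by blast
    moreover have "veer t {x, y} = vv (veer t {0,1}) (veer t {2,3}) x y"
      using vv_lemma[OF vr h(1) xy4 xy(3)] .
    moreover have "veer t2 {sg x, sg y} = vv (veer t2 {0,1}) (veer t2 {2,3}) (sg x) (sg y)"
      using vv_lemma[OF vr g(1) bij_betw_apply[OF g(2) xy4(1)] bij_betw_apply[OF g(2) xy4(2)]]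
        inj_onD[OF inj _ xy4] xy(3) by blast
    ultimately show "vv (veer t {0,1}) (veer t {2,3}) x y = vv (veer t2 {0,1}) (veer t2 {2,3}) (sg x) (sg y)"
      by simp
  qed
  have abc: "a \<in> {0,1,2,3}" "b \<in> {0,1,2,3}" "c \<in> {0,1,2,3}" "a \<noteq> b" "a \<noteq> c" "b \<noteq> c"
    using h unfolding V4_def by auto
  note C = core[OF P O abc taut vrr]
  have lhs: "wface gl veer (fst (cross gl s)) =
     (if c \<in> {0,1} then (odd c = (veer t2 {2,3} \<noteq> odd (sg c))) else (odd (sg c) = (veer t {2,3} \<noteq> odd c)))"
    unfolding s cross_def wface_def using g(3,4) by (simp add: sg_def t2_def)
  have rhs: "Phi veer (around gl s) = phi (sg a) (sg b) (veer t2 {2,3})"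
    unfolding s around_def Phi_def sg_def t2_def by simp
  show ?thesis using C lhs rhs by (simp add: s Phi_def)
qed


definition Wp :: "'t gluing \<Rightarrow> ('t \<Rightarrow> nat set \<Rightarrow> bool) \<Rightarrow> (('t \<times> nat) \<times> bool) list \<Rightarrow> bool" where
  "Wp gl veer w = odd (length (filter (\<lambda>x. wface gl veer (fst x)) w))"

lemma valid_funpow:
  assumes "face_pairing T gl" "valid T s"
  shows "valid T ((around gl ^^ k) s)"
  by (induction k) (auto simp: assms valid_around)

lemma relator_sum:
  assumes vt: "veering_triangulation T gl veer" and v: "valid T s"
  shows "Wp gl veer (map (\<lambda>k. cross gl ((around gl ^^ k) s)) [0..<n])
         = (Phi veer s \<noteq> Phi veer ((around gl ^^ n) s))"
proof (induction n)
  case 0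
  then show ?case by (simp add: Wp_def)
next
  case (Suc n)
  have fp: "face_pairing T gl" using vt unfolding veering_triangulation_def by auto
  have L: "wface gl veer (fst (cross gl ((around gl ^^ n) s)))
        = (Phi veer ((around gl ^^ n) s) \<noteq> Phi veer ((around gl ^^ Suc n) s))"
    using local_step[OF vt valid_funpow[OF fp v, of n]] by simp
  show ?case using Suc L by (auto simp: Wp_def)
qed

lemma relator_even:
  assumes vt: "veering_triangulation T gl veer" and r: "relator T gl r"
  shows "\<not> Wp gl veer r"
proof -
  obtain t a b c n where h: "t \<in> T" "a \<in> V4" "b \<in> V4" "c \<in> V4" "distinct [a, b, c]"
     "(around gl ^^ n) (t, a, b, c) = (t, a, b, c)"
     "r = map (\<lambda>k. cross gl ((around gl ^^ k) (t, a, b, c))) [0..<n]"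
    using r unfolding relator_def by blast
  have v: "valid T (t, a, b, c)" using h by (simp add: valid_def)
  show ?thesis using relator_sum[OF vt v, of n] h(6,7) by simp
qed

lemma Wp_append: "Wp gl veer (u @ z) = (Wp gl veer u \<noteq> Wp gl veer z)"
  by (simp add: Wp_def)

lemma hstep_inv:
  assumes vt: "veering_triangulation T gl veer" and h: "hstep T gl p q"
  shows "Wp gl veer (snd p) = Wp gl veer (snd q)"
proof -
  from h have "(\<exists>x u. snd p = x # u \<and> q = (dtgt gl x, u @ [x]))
      \<or> (\<exists>u z x. snd p = u @ z \<and> q = (fst p, u @ [x, dinv x] @ z))
      \<or> (\<exists>u z r. relator T gl r \<and> snd p = u @ z \<and> q = (fst p, u @ r @ z))"
    unfolding hstep_def by blast
  then show ?thesis
  proof (elim disjE exE conjE)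
    fix x u assume "snd p = x # u" "q = (dtgt gl x, u @ [x])"
    then show ?thesis by (simp add: Wp_def)
  next
    fix u z x assume "snd p = u @ z" "q = (fst p, u @ [x, dinv x] @ z)"
    then show ?thesis by (simp add: Wp_def dinv_def)
  next
    fix u z r assume "relator T gl r" "snd p = u @ z" "q = (fst p, u @ r @ z)"
    then show ?thesis using relator_even[OF vt] by (simp add: Wp_append)
  qed
qed

lemma homotopic_inv:
  assumes vt: "veering_triangulation T gl veer" and h: "freely_homotopic T gl p q"
  shows "Wp gl veer (snd p) = Wp gl veer (snd q)"
  using h unfolding freely_homotopic_def
proof (induction rule: rtranclp_induct)
  case base
  then show ?case by simp
next
  case (step y z)
  then show ?case using hstep_inv[OF vt, of y z] hstep_inv[OF vt, of z y] by auto
qed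


lemma walk_letters: "walk T gl v w v' \<Longrightarrow> x \<in> set w \<Longrightarrow> dual_edge T (fst x)"
  by (induction w arbitrary: v) auto

lemma Aface_eval:
  assumes vr: "veer_rhombus T veer" and t: "t \<in> T" and j: "j \<in> {2,3}" and i: "i' \<in> {0,1}"
  shows "(i' = Aface veer t j) = (odd i' = (veer t {2,3} \<noteq> odd j))"
proof -
  have r: "veer t {0, 3}" "veer t {1, 2}" "\<not> veer t {1, 3}" "\<not> veer t {0, 2}"
    using vr t unfolding veer_rhombus_def by auto
  have s: "V4 - {0, 2} = {1, 3}" "V4 - {1, 2} = {0, 3}" "V4 - {0, 3} = {1, 2}" "V4 - {1, 3} = {0, 2}"
    unfolding V4_def by auto
  have v: "veer t (V4 - {0, 2}) = False" "veer t (V4 - {1, 2}) = True"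
          "veer t (V4 - {0, 3}) = True" "veer t (V4 - {1, 3}) = False"
    using r by (simp_all only: s)
  define A where "A = (if j = 2 then (if veer t {2,3} then 1 else 0) else (if veer t {2,3} then 0 else 1::nat))"
  have jj: "j = 2 \<or> j = 3" using j by simp
  have A01: "A = 0 \<or> A = 1" unfolding A_def by simp
  have PA: "P = A" if "P = 0 \<or> P = 1" "veer t (V4 - {P, j}) = veer t {2,3}" for P
    using that(1) jj
  proof (elim disjE)
    assume "P = 0" "j = 2" then show ?thesis using that(2) v unfolding A_def by simp
  next
    assume "P = 0" "j = 3" then show ?thesis using that(2) v unfolding A_def by simp
  next
    assume "P = 1" "j = 2" then show ?thesis using that(2) v unfolding A_def by simp
  next
    assume "P = 1" "j = 3" then show ?thesis using that(2) v unfolding A_def by simp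
  qed
  have Aok: "veer t (V4 - {A, j}) = veer t {2,3}"
    using jj
  proof (elim disjE)
    assume "j = 2" then show ?thesis using v unfolding A_def by (cases "veer t {2,3}") simp_all
  next
    assume "j = 3" then show ?thesis using v unfolding A_def by (cases "veer t {2,3}") simp_all
  qed
  have "Aface veer t j = A"
    unfolding Aface_def
  proof (rule the_equality)
    show "A \<in> {0, 1} \<and> veer t (V4 - {A, j}) = veer t {2, 3}" using A01 Aok by auto
  next
    fix P assume "P \<in> {0, 1} \<and> veer t (V4 - {P, j}) = veer t {2, 3}"
    then show "P = A" using PA by blast
  qed
  moreover have "i' = 0 \<or> i' = 1" using i by simp
  ultimately show ?thesis using jj unfolding A_def by auto
qed

lemma card_sum_bool: "card {k. k < (n::nat) \<and> P k} = (\<Sum>k<n. of_bool (P k) :: nat)"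
proof (induction n)
  case 0 then show ?case by simp
next
  case (Suc n)
  have e: "{k. k < Suc n \<and> P k} = {k. k < n \<and> P k} \<union> (if P n then {n} else {})"
    by (auto simp: less_Suc_eq)
  show ?case using Suc by (simp add: e)
qed

lemma sum_shift_mod:
  assumes "n > 0"
  shows "(\<Sum>k<n. f (Suc k mod n)) = (\<Sum>k<n. (f k :: nat))"
proof -
  obtain m where n: "n = Suc m" using assms by (cases n) auto
  have "(\<Sum>k<Suc m. f (Suc k mod Suc m)) = (\<Sum>k<m. f (Suc k mod Suc m)) + f 0"
    by simp
  also have "(\<Sum>k<m. f (Suc k mod Suc m)) = (\<Sum>k<m. f (Suc k))"
    by (rule sum.cong) auto
  also have "(\<Sum>k<m. f (Suc k)) + f 0 = (\<Sum>k<Suc m. f k)"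
    unfolding sum.lessThan_Suc_shift by (simp add: add.commute)
  finally show ?thesis using n by simp
qed

lemma cycle_value:
  assumes vt: "veering_triangulation T gl veer" and dc: "directed_cycle T gl c"
  shows "Wp gl veer (snd (cycle_loop c)) = odd (num_anti_branching gl veer c)"
proof -
  have fp: "face_pairing T gl" and tg: "taut_gluing T gl" and vr: "veer_rhombus T veer"
    using vt unfolding veering_triangulation_def by auto
  define n where "n = length c"
  have n0: "n > 0" using dc unfolding directed_cycle_def n_def by simp
  have wk: "walk T gl (fst (hd c)) (map (\<lambda>f. (f, True)) c) (fst (hd c))"
    using dc unfolding directed_cycle_def closed_walk_def cycle_loop_def by simp
  have de: "fst (c ! k) \<in> T \<and> snd (c ! k) \<in> {0,1}" if "k < n" for k
  proof -
    have "(c ! k, True) \<in> set (map (\<lambda>f. (f, True)) c)" using that n_def by auto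
    then show ?thesis using walk_letters[OF wk] unfolding dual_edge_def by fastforce
  qed
  define \<alpha> where "\<alpha> m = odd (snd (c ! m))" for m
  define \<beta> where "\<beta> k = (veer (fst (gl (fst (c ! k)) (snd (c ! k)))) {2,3}
                      \<noteq> odd (snd (gl (fst (c ! k)) (snd (c ! k))) (snd (c ! k))))" for k
  have anti: "anti_branching_turn gl veer c k = (\<alpha> (Suc k mod n) = \<beta> k)" if k: "k < n" for k
  proof -
    obtain t i where ti: "c ! k = (t, i)" by (cases "c ! k") auto
    have h: "t \<in> T" "i \<in> {0,1}" using de[OF k] ti by auto
    have t2: "fst (gl t i) \<in> T" using fp h unfolding face_pairing_def V4_def by auto
    have j: "snd (gl t i) i \<in> {2,3}" using tg h unfolding taut_gluing_def V4_def by auto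
    have i': "snd (c ! (Suc k mod n)) \<in> {0,1}" using de[of "Suc k mod n"] n0 by auto
    show ?thesis
      unfolding anti_branching_turn_def ti \<alpha>_def \<beta>_def
      using Aface_eval[OF vr t2 j i'] by (simp add: n_def)
  qed
  have wf: "wface gl veer (c ! k) = (\<alpha> k = \<beta> k)" for k
    unfolding wface_def \<alpha>_def \<beta>_def by (cases "c ! k") auto
  have W1: "Wp gl veer (snd (cycle_loop c)) = odd (\<Sum>k<n. of_bool (\<alpha> k = \<beta> k) :: nat)"
  proof -
    have "length (filter (\<lambda>x. wface gl veer (fst x)) (map (\<lambda>f. (f, True)) c))
          = length (filter (wface gl veer) c)"
      by (induction c) auto
    also have "\<dots> = card {k. k < n \<and> wface gl veer (c ! k)}"
      unfolding n_def by (rule length_filter_conv_card)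
    also have "\<dots> = (\<Sum>k<n. of_bool (\<alpha> k = \<beta> k))"
      unfolding card_sum_bool wf ..
    finally show ?thesis unfolding Wp_def cycle_loop_def by simp
  qed
  have N1: "num_anti_branching gl veer c = (\<Sum>k<n. of_bool (\<alpha> (Suc k mod n) = \<beta> k))"
  proof -
    have "num_anti_branching gl veer c = (\<Sum>k<n. of_bool (anti_branching_turn gl veer c k))"
      unfolding num_anti_branching_def n_def card_sum_bool ..
    also have "\<dots> = (\<Sum>k<n. of_bool (\<alpha> (Suc k mod n) = \<beta> k))"
      by (rule sum.cong) (auto simp: anti)
    finally show ?thesis .
  qed
  have ev: "even ((\<Sum>k<n. of_bool (x k = y k)) + (\<Sum>k<n. of_bool (x k)) + (\<Sum>k<n. of_bool (y k)) + n)"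
    for x y :: "nat \<Rightarrow> bool"
  proof -
    have "even (\<Sum>k<n. of_bool (x k = y k) + of_bool (x k) + of_bool (y k) + (1::nat))"
      by (rule dvd_sum) auto
    also have "(\<Sum>k<n. of_bool (x k = y k) + of_bool (x k) + of_bool (y k) + (1::nat))
       = (\<Sum>k<n. of_bool (x k = y k)) + (\<Sum>k<n. of_bool (x k)) + (\<Sum>k<n. of_bool (y k)) + n"
      by (simp only: sum.distrib) simp
    finally show ?thesis .
  qed
  have e1: "even ((\<Sum>k<n. of_bool (\<alpha> k = \<beta> k)) + (\<Sum>k<n. of_bool (\<alpha> k)) + (\<Sum>k<n. of_bool (\<beta> k)) + n)"
    using ev[of \<alpha> \<beta>] .
  have e2: "even ((\<Sum>k<n. of_bool (\<alpha> (Suc k mod n) = \<beta> k)) + (\<Sum>k<n. of_bool (\<alpha> (Suc k mod n))) + (\<Sum>k<n. of_bool (\<beta> k)) + n)"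
    using ev[of "\<lambda>k. \<alpha> (Suc k mod n)" \<beta>] .
  have sh: "(\<Sum>k<n. of_bool (\<alpha> (Suc k mod n)) :: nat) = (\<Sum>k<n. of_bool (\<alpha> k))"
    using sum_shift_mod[OF n0, of "\<lambda>k. of_bool (\<alpha> k)"] by simp
  have par: "\<And>x y a a' b m :: nat. even (x + a + b + m) \<Longrightarrow> even (y + a' + b + m) \<Longrightarrow> a' = a \<Longrightarrow> odd x = odd y"
    by presburger
  show ?thesis unfolding W1 N1 using par[OF e1 e2 sh] .
qed

theorem mainTheorem7:
  fixes T :: "'t set" and gl :: "'t gluing" and veer :: "'t \<Rightarrow> nat set \<Rightarrow> bool"
    and c1 c2 :: "('t \<times> nat) list"
  assumes "veering_triangulation T gl veer"
    and "directed_cycle T gl c1" and "directed_cycle T gl c2"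
    and "freely_homotopic T gl (cycle_loop c1) (cycle_loop c2)"
  shows "even (num_anti_branching gl veer c1) \<longleftrightarrow> even (num_anti_branching gl veer c2)"
  using homotopic_inv[OF assms(1,4)] cycle_value[OF assms(1,2)] cycle_value[OF assms(1,3)]
  by simp

end
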